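(* The map $\alpha_M\colon M\otimes U_0\to U_0$, $(i,j)\otimes(r,s)\mapsto\big(\frac13(i+r),\frac13(j+s)\big)$, is an injective morphism of $\mathsf{SquaMS}$. Thus $(U_0,\alpha_M)$ is an injective $M\otimes-$ algebra.
   Context: Let $M_0=\{(r,s)\in[0,1]^2: r\in\{0,1\}\text{ or } s\in\{0,1\}\}$. A square metric space is a pair $(X,S_X)$ with $X$ a metric space with all distances at most $2$ and $S_X\colon M_0\to X$ injective such that (sq1) for $i\in\{0,1\}$, $r,s\in[0,1]$: $d_X(S_X(i,r),S_X(i,s))=|s-r|$ and $d_X(S_X(r,i),S_X(s,i))=|s-r|$; (sq2) $d_X(S_X(r,s),S_X(t,u))\ge|r-t|+|s-u|$. $\mathsf{SquaMS}$: these objects, with short maps $f$ satisfying $f\circ S_X=S_Y$ as morphisms. Let $N=\{0,1,2\}^2$, $M=N\setminus\{(1,1)\}$, also viewed as points of $\mathbb{R}^2$. For $X$ in $\mathsf{SquaMS}$, $M\otimes X=(M\times X)/\!\sim$, where $\sim$ is generated by $(m,S_X(p))\sim(n,S_X(q))$ whenever $m,n\in M$ differ by exactly $1$ in exactly one coordinate and $(m+p)/3=(n+q)/3$; $m\otimes x$ is the class of $(m,x)$. With $d((a,u),(b,v))=\frac13 d_X(u,v)$ if $a=b$ and $2$ otherwise, $M\otimes X$ has the quotient metric (infimum over finite chains of sums of consecutive distances, $\sim$-related consecutive pairs counting $0$). $S_{M\otimes X}(p)=m\otimes S_X(3p-m)$ for any $m\in M$ with $p\in(m+[0,1]^2)/3$.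 $U_0=[0,1]^2$ with the taxicab metric $|x-x'|+|y-y'|$ and $S_{U_0}$ the inclusion of $M_0$. *)

theory Defs
  imports "HOL-Analysis.Analysis"
begin

definition M0 :: "(real \<times> real) set" where
  "M0 = {(r, s). 0 \<le> r \<and> r \<le> 1 \<and> 0 \<le> s \<and> s \<le> 1 \<and> (r \<in> {0, 1} \<or> s \<in> {0, 1})}"

definition square_metric_space ::
    "'a set \<Rightarrow> ('a \<Rightarrow> 'a \<Rightarrow> real) \<Rightarrow> (real \<times> real \<Rightarrow> 'a) \<Rightarrow> bool" where
  "square_metric_space X d S \<longleftrightarrow>
     Metric_space X d \<and>
     (\<forall>x\<in>X. \<forall>y\<in>X. d x y \<le> 2) \<and>
     S ` M0 \<subseteq> X \<and> inj_on S M0 \<and>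
     (\<forall>i\<in>{0, 1}. \<forall>r\<in>{0..1}. \<forall>s\<in>{0..1}.
        d (S (i, r)) (S (i, s)) = \<bar>s - r\<bar> \<and> d (S (r, i)) (S (s, i)) = \<bar>s - r\<bar>) \<and>
     (\<forall>p\<in>M0. \<forall>q\<in>M0. d (S p) (S q) \<ge> \<bar>fst p - fst q\<bar> + \<bar>snd p - snd q\<bar>)"

definition squams_morphism ::
    "'a set \<Rightarrow> ('a \<Rightarrow> 'a \<Rightarrow> real) \<Rightarrow> (real \<times> real \<Rightarrow> 'a) \<Rightarrow>
     'b set \<Rightarrow> ('b \<Rightarrow> 'b \<Rightarrow> real) \<Rightarrow> (real \<times> real \<Rightarrow> 'b) \<Rightarrow> ('a \<Rightarrow> 'b) \<Rightarrow> bool" where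
  "squams_morphism X dX SX Y dY SY f \<longleftrightarrow>
     square_metric_space X dX SX \<and> square_metric_space Y dY SY \<and>
     f ` X \<subseteq> Y \<and>
     (\<forall>x\<in>X. \<forall>y\<in>X. dY (f x) (f y) \<le> dX x y) \<and>
     (\<forall>p\<in>M0. f (SX p) = SY p)"

definition Mset :: "(int \<times> int) set" where
  "Mset = ({0..2} \<times> {0..2}) - {(1, 1)}"

definition tens_gen ::
    "'a set \<Rightarrow> (real \<times> real \<Rightarrow> 'a) \<Rightarrow> (int \<times> int) \<times> 'a \<Rightarrow> (int \<times> int) \<times> 'a \<Rightarrow> bool" where
  "tens_gen X S z w \<longleftrightarrow>
     (\<exists>m n p q. z = (m, S p) \<and> w = (n, S q) \<and> m \<in> Mset \<and> n \<in> Mset \<and> p \<in> M0 \<and> q \<in> M0 \<and>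
        \<bar>fst m - fst n\<bar> + \<bar>snd m - snd n\<bar> = 1 \<and>
        (real_of_int (fst m) + fst p) / 3 = (real_of_int (fst n) + fst q) / 3 \<and>
        (real_of_int (snd m) + snd p) / 3 = (real_of_int (snd n) + snd q) / 3)"

definition tens_rel ::
    "'a set \<Rightarrow> (real \<times> real \<Rightarrow> 'a) \<Rightarrow> (int \<times> int) \<times> 'a \<Rightarrow> (int \<times> int) \<times> 'a \<Rightarrow> bool" where
  "tens_rel X S z w \<longleftrightarrow>
     z \<in> Mset \<times> X \<and> w \<in> Mset \<times> X \<and>
     (\<lambda>a b. tens_gen X S a b \<or> tens_gen X S b a)\<^sup>*\<^sup>* z w"

definition tens_class ::
    "'a set \<Rightarrow> (real \<times> real \<Rightarrow> 'a) \<Rightarrow> (int \<times> int) \<times> 'a \<Rightarrow> ((int \<times> int) \<times> 'a) set" where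
  "tens_class X S z = {w. tens_rel X S z w}"

definition tens_carrier ::
    "'a set \<Rightarrow> (real \<times> real \<Rightarrow> 'a) \<Rightarrow> ((int \<times> int) \<times> 'a) set set" where
  "tens_carrier X S = tens_class X S ` (Mset \<times> X)"

definition tens_base ::
    "('a \<Rightarrow> 'a \<Rightarrow> real) \<Rightarrow> (int \<times> int) \<times> 'a \<Rightarrow> (int \<times> int) \<times> 'a \<Rightarrow> real" where
  "tens_base d z w = (if fst z = fst w then d (snd z) (snd w) / 3 else 2)"

definition chain_cost ::
    "'a set \<Rightarrow> ('a \<Rightarrow> 'a \<Rightarrow> real) \<Rightarrow> (real \<times> real \<Rightarrow> 'a) \<Rightarrow> ((int \<times> int) \<times> 'a) list \<Rightarrow> real" where
  "chain_cost X d S zs =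
     sum_list (map (\<lambda>(a, b). if tens_rel X S a b then 0 else tens_base d a b) (zip zs (tl zs)))"

definition tens_dist ::
    "'a set \<Rightarrow> ('a \<Rightarrow> 'a \<Rightarrow> real) \<Rightarrow> (real \<times> real \<Rightarrow> 'a) \<Rightarrow>
     ((int \<times> int) \<times> 'a) set \<Rightarrow> ((int \<times> int) \<times> 'a) set \<Rightarrow> real" where
  "tens_dist X d S A B =
     (if A \<in> tens_carrier X S \<and> B \<in> tens_carrier X S then
        Inf {chain_cost X d S zs | zs. zs \<noteq> [] \<and> set zs \<subseteq> Mset \<times> X \<and> hd zs \<in> A \<and> last zs \<in> B}
      else 0)"

definition tens_S ::
    "'a set \<Rightarrow> (real \<times> real \<Rightarrow> 'a) \<Rightarrow> real \<times> real \<Rightarrow> ((int \<times> int) \<times> 'a) set" where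
  "tens_S X S p =
     (let m = (SOME m. m \<in> Mset \<and>
                  0 \<le> 3 * fst p - real_of_int (fst m) \<and> 3 * fst p - real_of_int (fst m) \<le> 1 \<and>
                  0 \<le> 3 * snd p - real_of_int (snd m) \<and> 3 * snd p - real_of_int (snd m) \<le> 1)
      in tens_class X S (m, S (3 * fst p - real_of_int (fst m), 3 * snd p - real_of_int (snd m))))"

definition U0 :: "(real \<times> real) set" where
  "U0 = {0..1} \<times> {0..1}"

definition dU0 :: "real \<times> real \<Rightarrow> real \<times> real \<Rightarrow> real" where
  "dU0 x y = \<bar>fst x - fst y\<bar> + \<bar>snd x - snd y\<bar>"

definition SU0 :: "real \<times> real \<Rightarrow> real \<times> real" where
  "SU0 p = p"

definition alpha_pre :: "(int \<times> int) \<times> (real \<times> real) \<Rightarrow> real \<times> real" where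
  "alpha_pre z = ((real_of_int (fst (fst z)) + fst (snd z)) / 3,
                  (real_of_int (snd (fst z)) + snd (snd z)) / 3)"

definition alpha_M :: "((int \<times> int) \<times> (real \<times> real)) set \<Rightarrow> real \<times> real" where
  "alpha_M A = alpha_pre (SOME z. z \<in> A)"

end

theory Submission
  imports Defs
begin

lemma gen_alpha: "tens_gen U0 SU0 a b \<Longrightarrow> alpha_pre a = alpha_pre b"
  unfolding tens_gen_def SU0_def alpha_pre_def by auto

lemma rel_alpha:
  assumes "tens_rel U0 SU0 z w" shows "alpha_pre z = alpha_pre w"
proof -
  have "(\<lambda>a b. tens_gen U0 SU0 a b \<or> tens_gen U0 SU0 b a)\<^sup>*\<^sup>* z w"
    using assms unfolding tens_rel_def by blast
  then show ?thesis
    by (induct rule: rtranclp_induct) (auto dest: gen_alpha)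
qed

lemma rel_sym: "tens_rel X S z w \<Longrightarrow> tens_rel X S w z"
proof -
  assume a: "tens_rel X S z w"
  have "(\<lambda>a b. tens_gen X S a b \<or> tens_gen X S b a)\<^sup>*\<^sup>* z w"
    using a unfolding tens_rel_def by blast
  then have "(\<lambda>a b. tens_gen X S a b \<or> tens_gen X S b a)\<^sup>*\<^sup>* w z"
  proof (induct rule: rtranclp_induct)
    case base then show ?case by simp
  next
    case (step y w)
    then show ?case
      by (metis (mono_tags, lifting) converse_rtranclp_into_rtranclp)
  qed
  then show ?thesis using a unfolding tens_rel_def by blast
qed

lemma rel_trans: "tens_rel X S z w \<Longrightarrow> tens_rel X S w v \<Longrightarrow> tens_rel X S z v"
  unfolding tens_rel_def by (meson rtranclp_trans)

lemma rel_refl: "z \<in> Mset \<times> X \<Longrightarrow> tens_rel X S z z"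
  unfolding tens_rel_def by simp

lemma class_eq: "tens_rel X S z w \<Longrightarrow> tens_class X S z = tens_class X S w"
  unfolding tens_class_def using rel_sym rel_trans by blast

lemma class_mem: "z \<in> Mset \<times> X \<Longrightarrow> z \<in> tens_class X S z"
  unfolding tens_class_def using rel_refl by blast

lemma Mset_bounds: "m \<in> Mset \<Longrightarrow> 0 \<le> fst m \<and> fst m \<le> 2 \<and> 0 \<le> snd m \<and> snd m \<le> 2"
  unfolding Mset_def by auto

lemma alpha_U0: assumes "z \<in> Mset \<times> U0" shows "alpha_pre z \<in> U0"
proof -
  obtain m x where z: "z = (m, x)" "m \<in> Mset" "x \<in> U0" using assms by auto
  have "0 \<le> real_of_int (fst m)" "real_of_int (fst m) \<le> 2"
       "0 \<le> real_of_int (snd m)" "real_of_int (snd m) \<le> 2"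
    using Mset_bounds[OF z(2)] by auto
  moreover have "0 \<le> fst x" "fst x \<le> 1" "0 \<le> snd x" "snd x \<le> 1"
    using z(3) unfolding U0_def by auto
  ultimately show ?thesis unfolding z alpha_pre_def U0_def by auto
qed

lemma rel_single:
  assumes m: "m \<in> Mset" and n: "n \<in> Mset" and x: "x \<in> U0" and y: "y \<in> U0"
    and eq: "alpha_pre (m, x) = alpha_pre (n, y)"
    and d: "\<bar>fst m - fst n\<bar> + \<bar>snd m - snd n\<bar> = 1"
  shows "tens_rel U0 SU0 (m, x) (n, y)"
proof -
  have e1: "real_of_int (fst m) + fst x = real_of_int (fst n) + fst y"
   and e2: "real_of_int (snd m) + snd x = real_of_int (snd n) + snd y"
    using eq unfolding alpha_pre_def by auto
  have xb: "0 \<le> fst x" "fst x \<le> 1" "0 \<le> snd x" "snd x \<le> 1"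
    using x unfolding U0_def by auto
  have yb: "0 \<le> fst y" "fst y \<le> 1" "0 \<le> snd y" "snd y \<le> 1"
    using y unfolding U0_def by auto
  have "x \<in> M0 \<and> y \<in> M0"
  proof (cases "fst m = fst n")
    case True
    then have "\<bar>snd m - snd n\<bar> = 1" using d by simp
    then have "snd m - snd n = 1 \<or> snd m - snd n = -1" by arith
    then have "real_of_int (snd m) - real_of_int (snd n) = 1 \<or>
               real_of_int (snd m) - real_of_int (snd n) = -1"
      by (metis of_int_1 of_int_diff of_int_minus)
    then have "(snd x = 0 \<and> snd y = 1) \<or> (snd x = 1 \<and> snd y = 0)"
      using e2 xb yb by auto
    then show ?thesis using xb yb unfolding M0_def by (cases x, cases y) auto
  next
    case False
    then have "\<bar>fst m - fst n\<bar> = 1" using d by arith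
    then have "fst m - fst n = 1 \<or> fst m - fst n = -1" by arith
    then have "real_of_int (fst m) - real_of_int (fst n) = 1 \<or>
               real_of_int (fst m) - real_of_int (fst n) = -1"
      by (metis of_int_1 of_int_diff of_int_minus)
    then have "(fst x = 0 \<and> fst y = 1) \<or> (fst x = 1 \<and> fst y = 0)"
      using e1 xb yb by auto
    then show ?thesis using xb yb unfolding M0_def by (cases x, cases y) auto
  qed
  then have "tens_gen U0 SU0 (m, x) (n, y)"
    unfolding tens_gen_def SU0_def using m n d e1 e2 by fastforce
  then show ?thesis unfolding tens_rel_def using m n x y by auto
qed


lemma int_abs_le1: "\<bar>real_of_int k\<bar> \<le> 1 \<Longrightarrow> k = -1 \<or> k = 0 \<or> k = 1"
proof -
  assume "\<bar>real_of_int k\<bar> \<le> 1"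
  then have "\<bar>k\<bar> \<le> 1" by linarith
  then show ?thesis by arith
qed

lemma rel_of_alpha:
  assumes z: "z \<in> Mset \<times> U0" and w: "w \<in> Mset \<times> U0"
    and eq: "alpha_pre z = alpha_pre w"
  shows "tens_rel U0 SU0 z w"
proof -
  obtain m x where zz: "z = (m, x)" "m \<in> Mset" "x \<in> U0" using z by auto
  obtain n y where ww: "w = (n, y)" "n \<in> Mset" "y \<in> U0" using w by auto
  have e1: "real_of_int (fst m) + fst x = real_of_int (fst n) + fst y"
   and e2: "real_of_int (snd m) + snd x = real_of_int (snd n) + snd y"
    using eq unfolding alpha_pre_def zz ww by auto
  have xb: "0 \<le> fst x" "fst x \<le> 1" "0 \<le> snd x" "snd x \<le> 1"
    using zz(3) unfolding U0_def by auto
  have yb: "0 \<le> fst y" "fst y \<le> 1" "0 \<le> snd y" "snd y \<le> 1"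
    using ww(3) unfolding U0_def by auto
  have "\<bar>real_of_int (fst m - fst n)\<bar> \<le> 1" using e1 xb yb by simp
  then have d1: "fst m - fst n = -1 \<or> fst m - fst n = 0 \<or> fst m - fst n = 1"
    by (rule int_abs_le1)
  have "\<bar>real_of_int (snd m - snd n)\<bar> \<le> 1" using e2 xb yb by simp
  then have d2: "snd m - snd n = -1 \<or> snd m - snd n = 0 \<or> snd m - snd n = 1"
    by (rule int_abs_le1)
  consider (same) "fst m = fst n" "snd m = snd n"
    | (one) "\<bar>fst m - fst n\<bar> + \<bar>snd m - snd n\<bar> = 1"
    | (two) "\<bar>fst m - fst n\<bar> = 1" "\<bar>snd m - snd n\<bar> = 1"
    using d1 d2 by arith
  then show ?thesis
  proof cases
    case same
    then have "m = n" by (simp add: prod_eq_iff)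
    moreover have "x = y" using same e1 e2 by (simp add: prod_eq_iff)
    ultimately show ?thesis using rel_refl[OF z, of SU0] zz ww by simp
  next
    case one
    then show ?thesis using rel_single zz ww eq by simp
  next
    case two
    have mb: "0 \<le> fst m" "fst m \<le> 2" "0 \<le> snd m" "snd m \<le> 2"
      using Mset_bounds[OF zz(2)] by auto
    have nb: "0 \<le> fst n" "fst n \<le> 2" "0 \<le> snd n" "snd n \<le> 2"
      using Mset_bounds[OF ww(2)] by auto
    have "(fst m, snd n) \<in> Mset \<or> (fst n, snd m) \<in> Mset"
      using mb nb two unfolding Mset_def by auto
    then show ?thesis
    proof
      assume k: "(fst m, snd n) \<in> Mset"
      let ?u = "(fst x, snd y)"
      have u: "?u \<in> U0" using xb yb unfolding U0_def by auto
      have "tens_rel U0 SU0 (m, x) ((fst m, snd n), ?u)"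
        apply (rule rel_single[OF zz(2) k zz(3) u])
        using e2 two unfolding alpha_pre_def by auto
      moreover have "tens_rel U0 SU0 ((fst m, snd n), ?u) (n, y)"
        apply (rule rel_single[OF k ww(2) u ww(3)])
        using e1 two unfolding alpha_pre_def by auto
      ultimately show ?thesis using zz ww rel_trans by blast
    next
      assume k: "(fst n, snd m) \<in> Mset"
      let ?u = "(fst y, snd x)"
      have u: "?u \<in> U0" using xb yb unfolding U0_def by auto
      have "tens_rel U0 SU0 (m, x) ((fst n, snd m), ?u)"
        apply (rule rel_single[OF zz(2) k zz(3) u])
        using e1 two unfolding alpha_pre_def by auto
      moreover have "tens_rel U0 SU0 ((fst n, snd m), ?u) (n, y)"
        apply (rule rel_single[OF k ww(2) u ww(3)])
        using e2 two unfolding alpha_pre_def by auto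
      ultimately show ?thesis using zz ww rel_trans by blast
    qed
  qed
qed


lemma alpha_class:
  assumes z: "z \<in> Mset \<times> U0"
  shows "alpha_M (tens_class U0 SU0 z) = alpha_pre z"
proof -
  have "z \<in> tens_class U0 SU0 z" by (rule class_mem[OF z])
  then have "(SOME w. w \<in> tens_class U0 SU0 z) \<in> tens_class U0 SU0 z" by (rule someI)
  then have "tens_rel U0 SU0 z (SOME w. w \<in> tens_class U0 SU0 z)"
    unfolding tens_class_def by simp
  then show ?thesis unfolding alpha_M_def using rel_alpha by metis
qed

lemma alpha_inj: "inj_on alpha_M (tens_carrier U0 SU0)"
proof (rule inj_onI)
  fix A B assume A: "A \<in> tens_carrier U0 SU0" and B: "B \<in> tens_carrier U0 SU0"
    and e: "alpha_M A = alpha_M B"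
  obtain z where z: "z \<in> Mset \<times> U0" "A = tens_class U0 SU0 z"
    using A unfolding tens_carrier_def by auto
  obtain w where w: "w \<in> Mset \<times> U0" "B = tens_class U0 SU0 w"
    using B unfolding tens_carrier_def by auto
  have "alpha_pre z = alpha_pre w" using e z w alpha_class by simp
  then have "tens_rel U0 SU0 z w" using rel_of_alpha z w by blast
  then show "A = B" using z w class_eq by blast
qed

lemma carrier_alpha: "A \<in> tens_carrier U0 SU0 \<Longrightarrow> alpha_M A \<in> U0"
  unfolding tens_carrier_def using alpha_class alpha_U0 by auto

definition stp :: "(int \<times> int) \<times> (real \<times> real) \<Rightarrow> (int \<times> int) \<times> (real \<times> real) \<Rightarrow> real" where
  "stp a b = (if tens_rel U0 SU0 a b then 0 else tens_base dU0 a b)"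

lemma cost_simps:
  "chain_cost U0 dU0 SU0 [] = 0"
  "chain_cost U0 dU0 SU0 [a] = 0"
  "chain_cost U0 dU0 SU0 (a # b # r) = stp a b + chain_cost U0 dU0 SU0 (b # r)"
  unfolding chain_cost_def stp_def by auto

lemma cost_append:
  "xs \<noteq> [] \<Longrightarrow> ys \<noteq> [] \<Longrightarrow>
   chain_cost U0 dU0 SU0 (xs @ ys) =
     chain_cost U0 dU0 SU0 xs + stp (last xs) (hd ys) + chain_cost U0 dU0 SU0 ys"
proof (induct xs)
  case Nil then show ?case by simp
next
  case (Cons a xs)
  show ?case
  proof (cases "xs = []")
    case True
    then show ?thesis using Cons by (cases ys) (auto simp: cost_simps)
  next
    case False
    then obtain b r where "xs = b # r" by (cases xs) auto
    then show ?thesis using Cons False by (auto simp: cost_simps)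
  qed
qed

lemma dU0_sym: "dU0 x y = dU0 y x"
  unfolding dU0_def by (simp add: abs_minus_commute)

lemma dU0_nonneg: "0 \<le> dU0 x y"
  unfolding dU0_def by simp

lemma stp_sym: "stp a b = stp b a"
proof -
  have "tens_rel U0 SU0 a b = tens_rel U0 SU0 b a" using rel_sym by blast
  then show ?thesis unfolding stp_def tens_base_def using dU0_sym[of "snd a" "snd b"] by auto
qed

lemma stp_nonneg: "0 \<le> stp a b"
  unfolding stp_def tens_base_def using dU0_nonneg by simp

lemma cost_nonneg: "0 \<le> chain_cost U0 dU0 SU0 zs"
  unfolding chain_cost_def
  by (rule sum_list_nonneg) (auto simp: tens_base_def dU0_nonneg)

lemma cost_rev: "chain_cost U0 dU0 SU0 (rev zs) = chain_cost U0 dU0 SU0 zs"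
proof (induct zs)
  case Nil then show ?case by simp
next
  case (Cons a zs)
  show ?case
  proof (cases "zs = []")
    case True then show ?thesis by simp
  next
    case False
    then obtain b r where br: "zs = b # r" by (cases zs) auto
    have "chain_cost U0 dU0 SU0 (rev (a # zs)) = chain_cost U0 dU0 SU0 (rev zs @ [a])" by simp
    also have "\<dots> = chain_cost U0 dU0 SU0 (rev zs) + stp (last (rev zs)) a"
      using cost_append[of "rev zs" "[a]"] False by (simp add: cost_simps)
    also have "\<dots> = chain_cost U0 dU0 SU0 zs + stp a b"
      using Cons br by (simp add: last_rev stp_sym)
    also have "\<dots> = chain_cost U0 dU0 SU0 (a # zs)" using br by (simp add: cost_simps)
    finally show ?thesis .
  qed
qed


lemma dU0_tri: "dU0 x z \<le> dU0 x y + dU0 y z"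
  unfolding dU0_def by arith

lemma dU0_le2: "x \<in> U0 \<Longrightarrow> y \<in> U0 \<Longrightarrow> dU0 x y \<le> 2"
  unfolding dU0_def U0_def by (cases x, cases y) auto

lemma dU0_zero: "dU0 x y = 0 \<longleftrightarrow> x = y"
  unfolding dU0_def by (cases x, cases y) auto

lemma step_ge:
  assumes a: "a \<in> Mset \<times> U0" and b: "b \<in> Mset \<times> U0"
  shows "dU0 (alpha_pre a) (alpha_pre b) \<le> stp a b"
proof (cases "tens_rel U0 SU0 a b")
  case True
  then show ?thesis using rel_alpha dU0_zero stp_nonneg by (metis order_refl)
next
  case nr: False
  show ?thesis
  proof (cases "fst a = fst b")
    case True
    obtain m x where aa: "a = (m, x)" using a by auto
    obtain y where bb: "b = (m, y)" using b True aa by (cases b) auto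
    have "dU0 (alpha_pre a) (alpha_pre b) = dU0 x y / 3"
    proof -
      have 1: "(real_of_int (fst m) + fst x) / 3 - (real_of_int (fst m) + fst y) / 3 = (fst x - fst y) / 3"
        by (simp add: field_simps)
      have 2: "(real_of_int (snd m) + snd x) / 3 - (real_of_int (snd m) + snd y) / 3 = (snd x - snd y) / 3"
        by (simp add: field_simps)
      show ?thesis unfolding aa bb alpha_pre_def dU0_def fst_conv snd_conv 1 2 by simp
    qed
    then show ?thesis unfolding stp_def tens_base_def using nr aa bb by simp
  next
    case False
    have "dU0 (alpha_pre a) (alpha_pre b) \<le> 2" using alpha_U0 a b dU0_le2 by blast
    then show ?thesis unfolding stp_def tens_base_def using nr False by simp
  qed
qed

lemma chain_ge:
  "zs \<noteq> [] \<Longrightarrow> set zs \<subseteq> Mset \<times> U0 \<Longrightarrow>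
   dU0 (alpha_pre (hd zs)) (alpha_pre (last zs)) \<le> chain_cost U0 dU0 SU0 zs"
proof (induct zs)
  case Nil then show ?case by simp
next
  case (Cons a zs)
  show ?case
  proof (cases "zs = []")
    case True
    have "dU0 (alpha_pre a) (alpha_pre a) = 0" by (simp add: dU0_def)
    then show ?thesis using True by (simp add: cost_simps)
  next
    case False
    then obtain b r where br: "zs = b # r" by (cases zs) auto
    have ih: "dU0 (alpha_pre b) (alpha_pre (last zs)) \<le> chain_cost U0 dU0 SU0 zs"
      using Cons br by auto
    have st: "dU0 (alpha_pre a) (alpha_pre b) \<le> stp a b"
      using Cons.prems br by (intro step_ge) auto
    have "dU0 (alpha_pre a) (alpha_pre (last zs)) \<le> dU0 (alpha_pre a) (alpha_pre b) + dU0 (alpha_pre b) (alpha_pre (last zs))"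
      by (rule dU0_tri)
    then show ?thesis using ih st br by (simp add: cost_simps)
  qed
qed

definition chains :: "((int \<times> int) \<times> (real \<times> real)) set \<Rightarrow> ((int \<times> int) \<times> (real \<times> real)) set \<Rightarrow> ((int \<times> int) \<times> (real \<times> real)) list set" where
  "chains A B = {zs. zs \<noteq> [] \<and> set zs \<subseteq> Mset \<times> U0 \<and> hd zs \<in> A \<and> last zs \<in> B}"

lemma dist_eq:
  assumes "A \<in> tens_carrier U0 SU0" "B \<in> tens_carrier U0 SU0"
  shows "tens_dist U0 dU0 SU0 A B = Inf (chain_cost U0 dU0 SU0 ` chains A B)"
proof -
  have "{chain_cost U0 dU0 SU0 zs | zs. zs \<noteq> [] \<and> set zs \<subseteq> Mset \<times> U0 \<and> hd zs \<in> A \<and> last zs \<in> B}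
        = chain_cost U0 dU0 SU0 ` chains A B"
    unfolding chains_def by auto
  then show ?thesis unfolding tens_dist_def using assms by simp
qed

lemma carrier_rep:
  assumes "A \<in> tens_carrier U0 SU0"
  obtains a where "a \<in> Mset \<times> U0" "A = tens_class U0 SU0 a" "a \<in> A"
  using assms class_mem unfolding tens_carrier_def by blast

lemma class_rel: "z \<in> tens_class X S a \<Longrightarrow> tens_rel X S a z"
  unfolding tens_class_def by simp

lemma pair_chain:
  assumes "a \<in> Mset \<times> U0" "b \<in> Mset \<times> U0" "a \<in> A" "b \<in> B"
  shows "[a, b] \<in> chains A B"
  using assms unfolding chains_def by auto

lemma chains_ne:
  assumes "A \<in> tens_carrier U0 SU0" "B \<in> tens_carrier U0 SU0"
  shows "chains A B \<noteq> {}"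
proof -
  obtain a where "a \<in> Mset \<times> U0" "a \<in> A" using carrier_rep[OF assms(1)] by metis
  moreover obtain b where "b \<in> Mset \<times> U0" "b \<in> B" using carrier_rep[OF assms(2)] by metis
  ultimately show ?thesis using pair_chain by blast
qed

lemma dist_le:
  assumes "A \<in> tens_carrier U0 SU0" "B \<in> tens_carrier U0 SU0" "zs \<in> chains A B"
  shows "tens_dist U0 dU0 SU0 A B \<le> chain_cost U0 dU0 SU0 zs"
  unfolding dist_eq[OF assms(1,2)]
  by (rule cInf_lower) (auto intro: assms(3) bdd_belowI[of _ 0] cost_nonneg)

lemma dist_ge:
  assumes "A \<in> tens_carrier U0 SU0" "B \<in> tens_carrier U0 SU0"
    "\<And>zs. zs \<in> chains A B \<Longrightarrow> c \<le> chain_cost U0 dU0 SU0 zs"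
  shows "c \<le> tens_dist U0 dU0 SU0 A B"
  unfolding dist_eq[OF assms(1,2)]
  by (rule cInf_greatest) (use chains_ne[OF assms(1,2)] assms(3) in auto)

lemma dist_nonneg: "0 \<le> tens_dist U0 dU0 SU0 A B"
proof (cases "A \<in> tens_carrier U0 SU0 \<and> B \<in> tens_carrier U0 SU0")
  case True then show ?thesis using dist_ge cost_nonneg by blast
next
  case False then show ?thesis unfolding tens_dist_def by auto
qed

lemma alpha_mem:
  assumes "A \<in> tens_carrier U0 SU0" "z \<in> A"
  shows "alpha_pre z = alpha_M A"
proof -
  obtain a where a: "a \<in> Mset \<times> U0" "A = tens_class U0 SU0 a" using carrier_rep[OF assms(1)] by metis
  then have "tens_rel U0 SU0 a z" using assms(2) class_rel by blast
  then show ?thesis using rel_alpha alpha_class a by metis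
qed

lemma short:
  assumes A: "A \<in> tens_carrier U0 SU0" and B: "B \<in> tens_carrier U0 SU0"
  shows "dU0 (alpha_M A) (alpha_M B) \<le> tens_dist U0 dU0 SU0 A B"
proof (rule dist_ge[OF A B])
  fix zs assume "zs \<in> chains A B"
  then have zs: "zs \<noteq> []" "set zs \<subseteq> Mset \<times> U0" "hd zs \<in> A" "last zs \<in> B"
    unfolding chains_def by auto
  show "dU0 (alpha_M A) (alpha_M B) \<le> chain_cost U0 dU0 SU0 zs"
    using chain_ge[OF zs(1,2)] alpha_mem[OF A zs(3)] alpha_mem[OF B zs(4)] by simp
qed


lemma rev_chain: "zs \<in> chains A B \<Longrightarrow> rev zs \<in> chains B A"
  unfolding chains_def by (auto simp: hd_rev last_rev)

lemma dist_sym_le: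
  assumes A: "A \<in> tens_carrier U0 SU0" and B: "B \<in> tens_carrier U0 SU0"
  shows "tens_dist U0 dU0 SU0 A B \<le> tens_dist U0 dU0 SU0 B A"
proof (rule dist_ge[OF B A])
  fix zs assume "zs \<in> chains B A"
  then have "rev zs \<in> chains A B" by (rule rev_chain)
  then show "tens_dist U0 dU0 SU0 A B \<le> chain_cost U0 dU0 SU0 zs"
    using dist_le[OF A B] cost_rev by metis
qed

lemma dist_sym: "tens_dist U0 dU0 SU0 A B = tens_dist U0 dU0 SU0 B A"
proof (cases "A \<in> tens_carrier U0 SU0 \<and> B \<in> tens_carrier U0 SU0")
  case True then show ?thesis using dist_sym_le by (meson order_antisym)
next
  case False then show ?thesis unfolding tens_dist_def by auto
qed

lemma dist_self:
  assumes A: "A \<in> tens_carrier U0 SU0"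
  shows "tens_dist U0 dU0 SU0 A A = 0"
proof -
  obtain a where a: "a \<in> Mset \<times> U0" "a \<in> A" using carrier_rep[OF A] by metis
  have "[a] \<in> chains A A" using a unfolding chains_def by auto
  then have "tens_dist U0 dU0 SU0 A A \<le> 0" using dist_le[OF A A] cost_simps(2) by metis
  then show ?thesis using dist_nonneg by (meson order_antisym)
qed

lemma dist_le2:
  assumes A: "A \<in> tens_carrier U0 SU0" and B: "B \<in> tens_carrier U0 SU0"
  shows "tens_dist U0 dU0 SU0 A B \<le> 2"
proof -
  obtain a where a: "a \<in> Mset \<times> U0" "a \<in> A" using carrier_rep[OF A] by metis
  obtain b where b: "b \<in> Mset \<times> U0" "b \<in> B" using carrier_rep[OF B] by metis
  have "stp a b \<le> 2"
  proof -
    have "dU0 (snd a) (snd b) \<le> 2" using a b dU0_le2 by auto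
    then show ?thesis unfolding stp_def tens_base_def by auto
  qed
  then show ?thesis using dist_le[OF A B pair_chain[OF a(1) b(1) a(2) b(2)]]
    by (simp add: cost_simps)
qed

lemma dist_tri:
  assumes A: "A \<in> tens_carrier U0 SU0" and B: "B \<in> tens_carrier U0 SU0"
    and C: "C \<in> tens_carrier U0 SU0"
  shows "tens_dist U0 dU0 SU0 A C \<le> tens_dist U0 dU0 SU0 A B + tens_dist U0 dU0 SU0 B C"
proof -
  have key: "tens_dist U0 dU0 SU0 A C \<le> chain_cost U0 dU0 SU0 xs + chain_cost U0 dU0 SU0 ys"
    if xs: "xs \<in> chains A B" and ys: "ys \<in> chains B C" for xs ys
  proof -
    have x: "xs \<noteq> []" "set xs \<subseteq> Mset \<times> U0" "hd xs \<in> A" "last xs \<in> B"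
      using xs unfolding chains_def by auto
    have y: "ys \<noteq> []" "set ys \<subseteq> Mset \<times> U0" "hd ys \<in> B" "last ys \<in> C"
      using ys unfolding chains_def by auto
    obtain b where b: "B = tens_class U0 SU0 b" using carrier_rep[OF B] by metis
    have "tens_rel U0 SU0 (last xs) (hd ys)"
      using x(4) y(3) b class_rel rel_sym rel_trans by metis
    then have st: "stp (last xs) (hd ys) = 0" unfolding stp_def by simp
    have "xs @ ys \<in> chains A C" using x y unfolding chains_def by auto
    then have "tens_dist U0 dU0 SU0 A C \<le> chain_cost U0 dU0 SU0 (xs @ ys)"
      by (rule dist_le[OF A C])
    also have "\<dots> = chain_cost U0 dU0 SU0 xs + chain_cost U0 dU0 SU0 ys"
      using cost_append[OF x(1) y(1)] st by simp
    finally show ?thesis .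
  qed
  have "tens_dist U0 dU0 SU0 A C - tens_dist U0 dU0 SU0 B C \<le> chain_cost U0 dU0 SU0 xs"
    if xs: "xs \<in> chains A B" for xs
  proof -
    have "tens_dist U0 dU0 SU0 A C - chain_cost U0 dU0 SU0 xs \<le> tens_dist U0 dU0 SU0 B C"
    proof (rule dist_ge[OF B C])
      fix zs assume "zs \<in> chains B C"
      from key[OF xs this] show "tens_dist U0 dU0 SU0 A C - chain_cost U0 dU0 SU0 xs \<le> chain_cost U0 dU0 SU0 zs"
        by simp
    qed
    then show ?thesis by simp
  qed
  then have "tens_dist U0 dU0 SU0 A C - tens_dist U0 dU0 SU0 B C \<le> tens_dist U0 dU0 SU0 A B"
    by (rule dist_ge[OF A B])
  then show ?thesis by simp
qed

lemma tens_metric: "Metric_space (tens_carrier U0 SU0) (tens_dist U0 dU0 SU0)"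
proof
  fix x y show "0 \<le> tens_dist U0 dU0 SU0 x y" by (rule dist_nonneg)
next
  fix x y show "tens_dist U0 dU0 SU0 x y = tens_dist U0 dU0 SU0 y x" by (rule dist_sym)
next
  fix x y assume x: "x \<in> tens_carrier U0 SU0" and y: "y \<in> tens_carrier U0 SU0"
  show "tens_dist U0 dU0 SU0 x y = 0 \<longleftrightarrow> x = y"
  proof
    assume "tens_dist U0 dU0 SU0 x y = 0"
    then have "dU0 (alpha_M x) (alpha_M y) \<le> 0" using short[OF x y] by simp
    then have "alpha_M x = alpha_M y" using dU0_nonneg dU0_zero by (meson order_antisym)
    then show "x = y" using alpha_inj x y by (meson inj_onD)
  next
    assume "x = y" then show "tens_dist U0 dU0 SU0 x y = 0" using dist_self x by simp
  qed
next
  fix x y z assume "x \<in> tens_carrier U0 SU0" "y \<in> tens_carrier U0 SU0" "z \<in> tens_carrier U0 SU0"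
  then show "tens_dist U0 dU0 SU0 x z \<le> tens_dist U0 dU0 SU0 x y + tens_dist U0 dU0 SU0 y z"
    by (rule dist_tri)
qed


lemma S_cell:
  assumes m: "m \<in> Mset"
    and c: "0 \<le> 3 * fst p - real_of_int (fst m)" "3 * fst p - real_of_int (fst m) \<le> 1"
           "0 \<le> 3 * snd p - real_of_int (snd m)" "3 * snd p - real_of_int (snd m) \<le> 1"
  shows "tens_S U0 SU0 p = tens_class U0 SU0 (m, (3 * fst p - real_of_int (fst m), 3 * snd p - real_of_int (snd m)))"
    and "(m, (3 * fst p - real_of_int (fst m), 3 * snd p - real_of_int (snd m))) \<in> Mset \<times> U0"
    and "alpha_pre (m, (3 * fst p - real_of_int (fst m), 3 * snd p - real_of_int (snd m))) = p"
proof -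
  let ?P = "\<lambda>m. m \<in> Mset \<and>
                  0 \<le> 3 * fst p - real_of_int (fst m) \<and> 3 * fst p - real_of_int (fst m) \<le> 1 \<and>
                  0 \<le> 3 * snd p - real_of_int (snd m) \<and> 3 * snd p - real_of_int (snd m) \<le> 1"
  let ?z = "\<lambda>m. (m, (3 * fst p - real_of_int (fst m), 3 * snd p - real_of_int (snd m)))"
  have Pm: "?P m" using m c by simp
  then have Pm': "?P (SOME m. ?P m)" by (rule someI)
  have zin: "?z m' \<in> Mset \<times> U0" if "?P m'" for m'
    using that unfolding U0_def by auto
  have za: "alpha_pre (?z m') = p" for m'
    unfolding alpha_pre_def by (cases p) simp
  have "tens_rel U0 SU0 (?z (SOME m. ?P m)) (?z m)"
    by (rule rel_of_alpha[OF zin[OF Pm'] zin[OF Pm]]) (simp add: za)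
  then have "tens_class U0 SU0 (?z (SOME m. ?P m)) = tens_class U0 SU0 (?z m)"
    by (rule class_eq)
  then show "tens_S U0 SU0 p = tens_class U0 SU0 (?z m)"
    unfolding tens_S_def Let_def SU0_def by simp
  show "?z m \<in> Mset \<times> U0" by (rule zin[OF Pm])
  show "alpha_pre (?z m) = p" by (rule za)
qed

lemma cell_exists:
  assumes p: "p \<in> M0"
  shows "\<exists>m. m \<in> Mset \<and> 0 \<le> 3 * fst p - real_of_int (fst m) \<and> 3 * fst p - real_of_int (fst m) \<le> 1 \<and>
                  0 \<le> 3 * snd p - real_of_int (snd m) \<and> 3 * snd p - real_of_int (snd m) \<le> 1"
proof -
  define k :: "real \<Rightarrow> int" where "k t = (if t \<le> 1/3 then 0 else if t \<le> 2/3 then 1 else 2)" for t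
  have pb: "0 \<le> fst p" "fst p \<le> 1" "0 \<le> snd p" "snd p \<le> 1"
       "fst p = 0 \<or> fst p = 1 \<or> snd p = 0 \<or> snd p = 1"
    using p unfolding M0_def by auto
  have kb: "0 \<le> 3 * t - real_of_int (k t) \<and> 3 * t - real_of_int (k t) \<le> 1" if "0 \<le> t" "t \<le> 1" for t
    using that unfolding k_def by auto
  have "(k (fst p), k (snd p)) \<in> Mset"
    using pb unfolding Mset_def k_def by auto
  then show ?thesis using kb pb by (intro exI[of _ "(k (fst p), k (snd p))"]) auto
qed

lemma S_props:
  assumes p: "p \<in> M0"
  shows "tens_S U0 SU0 p \<in> tens_carrier U0 SU0" "alpha_M (tens_S U0 SU0 p) = p"
proof -
  obtain m where m: "m \<in> Mset" "0 \<le> 3 * fst p - real_of_int (fst m)" "3 * fst p - real_of_int (fst m) \<le> 1"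
           "0 \<le> 3 * snd p - real_of_int (snd m)" "3 * snd p - real_of_int (snd m) \<le> 1"
    using cell_exists[OF p] by blast
  note S = S_cell[OF m]
  show "tens_S U0 SU0 p \<in> tens_carrier U0 SU0" unfolding S(1) tens_carrier_def using S(2) by blast
  show "alpha_M (tens_S U0 SU0 p) = p" unfolding S(1) using alpha_class[OF S(2)] S(3) by simp
qed

lemma cell_dist:
  assumes m: "m \<in> Mset"
    and c: "0 \<le> 3 * fst p - real_of_int (fst m)" "3 * fst p - real_of_int (fst m) \<le> 1"
           "0 \<le> 3 * snd p - real_of_int (snd m)" "3 * snd p - real_of_int (snd m) \<le> 1"
    and d: "0 \<le> 3 * fst q - real_of_int (fst m)" "3 * fst q - real_of_int (fst m) \<le> 1"
           "0 \<le> 3 * snd q - real_of_int (snd m)" "3 * snd q - real_of_int (snd m) \<le> 1"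
  shows "tens_dist U0 dU0 SU0 (tens_S U0 SU0 p) (tens_S U0 SU0 q) \<le> dU0 p q"
proof -
  note P = S_cell[OF m c] and Q = S_cell[OF m d]
  let ?z = "(m, (3 * fst p - real_of_int (fst m), 3 * snd p - real_of_int (snd m)))"
  let ?w = "(m, (3 * fst q - real_of_int (fst m), 3 * snd q - real_of_int (snd m)))"
  have A: "tens_S U0 SU0 p \<in> tens_carrier U0 SU0" unfolding P(1) tens_carrier_def using P(2) by blast
  have B: "tens_S U0 SU0 q \<in> tens_carrier U0 SU0" unfolding Q(1) tens_carrier_def using Q(2) by blast
  have "[?z, ?w] \<in> chains (tens_S U0 SU0 p) (tens_S U0 SU0 q)"
    unfolding P(1) Q(1) by (rule pair_chain[OF P(2) Q(2) class_mem[OF P(2)] class_mem[OF Q(2)]])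
  then have "tens_dist U0 dU0 SU0 (tens_S U0 SU0 p) (tens_S U0 SU0 q) \<le> stp ?z ?w"
    using dist_le[OF A B, of "[?z, ?w]"] cost_simps(3)[of ?z ?w "[]"] cost_simps(2)[of ?w] by simp
  also have "\<dots> \<le> dU0 (snd ?z) (snd ?w) / 3"
    unfolding stp_def tens_base_def using dU0_nonneg by simp
  also have "\<dots> = dU0 p q"
  proof -
    have 1: "3 * fst p - real_of_int (fst m) - (3 * fst q - real_of_int (fst m)) = 3 * (fst p - fst q)" by simp
    have 2: "3 * snd p - real_of_int (snd m) - (3 * snd q - real_of_int (snd m)) = 3 * (snd p - snd q)" by simp
    show ?thesis unfolding dU0_def snd_conv fst_conv 1 2 abs_mult by simp
  qed
  finally show ?thesis .
qed

lemma edge_abstract: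
  fixes f :: "real \<Rightarrow> real \<Rightarrow> real"
  assumes tri: "\<And>a b c. 0 \<le> a \<Longrightarrow> a \<le> 1 \<Longrightarrow> 0 \<le> b \<Longrightarrow> b \<le> 1 \<Longrightarrow> 0 \<le> c \<Longrightarrow> c \<le> 1 \<Longrightarrow>
                   f a c \<le> f a b + f b c"
    and c0: "\<And>a b. 0 \<le> a \<Longrightarrow> a \<le> b \<Longrightarrow> b \<le> 1/3 \<Longrightarrow> f a b \<le> b - a"
    and c1: "\<And>a b. 1/3 \<le> a \<Longrightarrow> a \<le> b \<Longrightarrow> b \<le> 2/3 \<Longrightarrow> f a b \<le> b - a"
    and c2: "\<And>a b. 2/3 \<le> a \<Longrightarrow> a \<le> b \<Longrightarrow> b \<le> 1 \<Longrightarrow> f a b \<le> b - a"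
    and rs: "0 \<le> r" "r \<le> s" "s \<le> 1"
  shows "f r s \<le> s - r"
proof -
  consider "s \<le> 1/3" | "2/3 \<le> r" | "1/3 \<le> r" "s \<le> 2/3" | "r \<le> 1/3" "1/3 \<le> s" "s \<le> 2/3"
    | "1/3 \<le> r" "r \<le> 2/3" "2/3 \<le> s" | "r \<le> 1/3" "2/3 \<le> s" by linarith
  then show ?thesis
  proof cases
    case 1 then show ?thesis using c0 rs by simp
  next
    case 2 then show ?thesis using c2 rs by simp
  next
    case 3 then show ?thesis using c1 rs by simp
  next
    case 4
    have "f r s \<le> f r (1/3) + f (1/3) s" using tri rs 4 by simp
    moreover have "f r (1/3) \<le> 1/3 - r" using c0 rs 4 by simp
    moreover have "f (1/3) s \<le> s - 1/3" using c1 rs 4 by simp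
    ultimately show ?thesis by simp
  next
    case 5
    have "f r s \<le> f r (2/3) + f (2/3) s" using tri rs 5 by simp
    moreover have "f r (2/3) \<le> 2/3 - r" using c1 rs 5 by simp
    moreover have "f (2/3) s \<le> s - 2/3" using c2 rs 5 by simp
    ultimately show ?thesis by simp
  next
    case 6
    have "f r s \<le> f r (1/3) + f (1/3) s" using tri rs 6 by simp
    moreover have "f (1/3) s \<le> f (1/3) (2/3) + f (2/3) s" using tri rs 6 by simp
    moreover have "f r (1/3) \<le> 1/3 - r" using c0 rs 6 by simp
    moreover have "f (1/3) (2/3) \<le> 1/3" using c1[of "1/3" "2/3"] by simp
    moreover have "f (2/3) s \<le> s - 2/3" using c2 rs 6 by simp
    ultimately show ?thesis by simp
  qed
qed


lemma vcell:
  assumes ij: "(i = 0 \<and> j = 0) \<or> (i = 1 \<and> j = (2::int))" and k: "k = 0 \<or> k = 1 \<or> k = (2::int)"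
    and ab: "real_of_int k / 3 \<le> a" "a \<le> b" "b \<le> (real_of_int k + 1) / 3"
  shows "tens_dist U0 dU0 SU0 (tens_S U0 SU0 (i, a)) (tens_S U0 SU0 (i, b)) \<le> b - a"
    and "tens_dist U0 dU0 SU0 (tens_S U0 SU0 (a, i)) (tens_S U0 SU0 (b, i)) \<le> b - a"
proof -
  have m1: "(j, k) \<in> Mset" using ij k unfolding Mset_def by auto
  have m2: "(k, j) \<in> Mset" using ij k unfolding Mset_def by auto
  have ci: "0 \<le> 3 * i - real_of_int j" "3 * i - real_of_int j \<le> 1" using ij by auto
  have ca: "0 \<le> 3 * a - real_of_int k" "3 * a - real_of_int k \<le> 1" using ab by auto
  have cb: "0 \<le> 3 * b - real_of_int k" "3 * b - real_of_int k \<le> 1" using ab by auto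
  have "tens_dist U0 dU0 SU0 (tens_S U0 SU0 (i, a)) (tens_S U0 SU0 (i, b)) \<le> dU0 (i, a) (i, b)"
    by (rule cell_dist[OF m1]) (use ci ca cb in simp_all)
  then show "tens_dist U0 dU0 SU0 (tens_S U0 SU0 (i, a)) (tens_S U0 SU0 (i, b)) \<le> b - a"
    using ab unfolding dU0_def by simp
  have "tens_dist U0 dU0 SU0 (tens_S U0 SU0 (a, i)) (tens_S U0 SU0 (b, i)) \<le> dU0 (a, i) (b, i)"
    by (rule cell_dist[OF m2]) (use ci ca cb in simp_all)
  then show "tens_dist U0 dU0 SU0 (tens_S U0 SU0 (a, i)) (tens_S U0 SU0 (b, i)) \<le> b - a"
    using ab unfolding dU0_def by simp
qed

lemma edge_le:
  assumes i: "i \<in> {0, 1}" and r: "r \<in> {0..1}" and s: "s \<in> {0..1}"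
  shows "tens_dist U0 dU0 SU0 (tens_S U0 SU0 (i, r)) (tens_S U0 SU0 (i, s)) \<le> \<bar>s - r\<bar>"
    and "tens_dist U0 dU0 SU0 (tens_S U0 SU0 (r, i)) (tens_S U0 SU0 (s, i)) \<le> \<bar>s - r\<bar>"
proof -
  define j :: int where "j = (if i = 0 then 0 else 2)"
  have ij: "(i = 0 \<and> j = 0) \<or> (i = 1 \<and> j = (2::int))" using i unfolding j_def by auto
  have M1: "(i, t) \<in> M0" if "0 \<le> t" "t \<le> 1" for t using i that unfolding M0_def by auto
  have M2: "(t, i) \<in> M0" if "0 \<le> t" "t \<le> 1" for t using i that unfolding M0_def by auto
  let ?f1 = "\<lambda>a b. tens_dist U0 dU0 SU0 (tens_S U0 SU0 (i, a)) (tens_S U0 SU0 (i, b))"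
  let ?f2 = "\<lambda>a b. tens_dist U0 dU0 SU0 (tens_S U0 SU0 (a, i)) (tens_S U0 SU0 (b, i))"
  have e1: "?f1 r' s' \<le> s' - r'" if "0 \<le> r'" "r' \<le> s'" "s' \<le> 1" for r' s'
  proof (rule edge_abstract[OF _ _ _ _ that])
    fix a b c :: real assume "0 \<le> a" "a \<le> 1" "0 \<le> b" "b \<le> 1" "0 \<le> c" "c \<le> 1"
    then show "?f1 a c \<le> ?f1 a b + ?f1 b c" using dist_tri S_props(1) M1 by blast
  next
    fix a b :: real assume "0 \<le> a" "a \<le> b" "b \<le> 1/3"
    then show "?f1 a b \<le> b - a" using vcell(1)[OF ij, of 0 a b] by simp
  next
    fix a b :: real assume "1/3 \<le> a" "a \<le> b" "b \<le> 2/3"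
    then show "?f1 a b \<le> b - a" using vcell(1)[OF ij, of 1 a b] by simp
  next
    fix a b :: real assume "2/3 \<le> a" "a \<le> b" "b \<le> 1"
    then show "?f1 a b \<le> b - a" using vcell(1)[OF ij, of 2 a b] by simp
  qed
  have e2: "?f2 r' s' \<le> s' - r'" if "0 \<le> r'" "r' \<le> s'" "s' \<le> 1" for r' s'
  proof (rule edge_abstract[OF _ _ _ _ that])
    fix a b c :: real assume "0 \<le> a" "a \<le> 1" "0 \<le> b" "b \<le> 1" "0 \<le> c" "c \<le> 1"
    then show "?f2 a c \<le> ?f2 a b + ?f2 b c" using dist_tri S_props(1) M2 by blast
  next
    fix a b :: real assume "0 \<le> a" "a \<le> b" "b \<le> 1/3"
    then show "?f2 a b \<le> b - a" using vcell(2)[OF ij, of 0 a b] by simp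
  next
    fix a b :: real assume "1/3 \<le> a" "a \<le> b" "b \<le> 2/3"
    then show "?f2 a b \<le> b - a" using vcell(2)[OF ij, of 1 a b] by simp
  next
    fix a b :: real assume "2/3 \<le> a" "a \<le> b" "b \<le> 1"
    then show "?f2 a b \<le> b - a" using vcell(2)[OF ij, of 2 a b] by simp
  qed
  show "?f1 r s \<le> \<bar>s - r\<bar>"
  proof (cases "r \<le> s")
    case True then show ?thesis using e1[of r s] r s by simp
  next
    case False then show ?thesis using e1[of s r] r s dist_sym by simp
  qed
  show "?f2 r s \<le> \<bar>s - r\<bar>"
  proof (cases "r \<le> s")
    case True then show ?thesis using e2[of r s] r s by simp
  next
    case False then show ?thesis using e2[of s r] r s dist_sym by simp
  qed
qed


lemma U0_sqms: "square_metric_space U0 dU0 SU0"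
  unfolding square_metric_space_def
proof (intro conjI)
  show "Metric_space U0 dU0"
    by unfold_locales (auto simp: dU0_nonneg dU0_zero intro: dU0_sym dU0_tri)
  show "\<forall>x\<in>U0. \<forall>y\<in>U0. dU0 x y \<le> 2" using dU0_le2 by blast
  show "SU0 ` M0 \<subseteq> U0" unfolding SU0_def M0_def U0_def by auto
  show "inj_on SU0 M0" unfolding SU0_def by simp
  show "\<forall>i\<in>{0, 1}. \<forall>r\<in>{0..1}. \<forall>s\<in>{0..1}.
     dU0 (SU0 (i, r)) (SU0 (i, s)) = \<bar>s - r\<bar> \<and> dU0 (SU0 (r, i)) (SU0 (s, i)) = \<bar>s - r\<bar>"
    unfolding SU0_def dU0_def by (simp add: abs_minus_commute)
  show "\<forall>p\<in>M0. \<forall>q\<in>M0. \<bar>fst p - fst q\<bar> + \<bar>snd p - snd q\<bar> \<le> dU0 (SU0 p) (SU0 q)"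
    unfolding SU0_def dU0_def by simp
qed

lemma tens_sqms: "square_metric_space (tens_carrier U0 SU0) (tens_dist U0 dU0 SU0) (tens_S U0 SU0)"
  unfolding square_metric_space_def
proof (intro conjI)
  show "Metric_space (tens_carrier U0 SU0) (tens_dist U0 dU0 SU0)" by (rule tens_metric)
  show "\<forall>x\<in>tens_carrier U0 SU0. \<forall>y\<in>tens_carrier U0 SU0. tens_dist U0 dU0 SU0 x y \<le> 2"
    using dist_le2 by blast
  show "tens_S U0 SU0 ` M0 \<subseteq> tens_carrier U0 SU0" using S_props(1) by blast
  show "inj_on (tens_S U0 SU0) M0" by (rule inj_on_inverseI[of _ alpha_M]) (rule S_props(2))
  show "\<forall>i\<in>{0, 1}. \<forall>r\<in>{0..1}. \<forall>s\<in>{0..1}.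
     tens_dist U0 dU0 SU0 (tens_S U0 SU0 (i, r)) (tens_S U0 SU0 (i, s)) = \<bar>s - r\<bar> \<and>
     tens_dist U0 dU0 SU0 (tens_S U0 SU0 (r, i)) (tens_S U0 SU0 (s, i)) = \<bar>s - r\<bar>"
  proof (intro ballI conjI)
    fix i r s :: real assume i: "i \<in> {0, 1}" and r: "r \<in> {0..1}" and s: "s \<in> {0..1}"
    have M: "(i, r) \<in> M0" "(i, s) \<in> M0" "(r, i) \<in> M0" "(s, i) \<in> M0"
      using i r s unfolding M0_def by auto
    have "dU0 (alpha_M (tens_S U0 SU0 (i, r))) (alpha_M (tens_S U0 SU0 (i, s)))
          \<le> tens_dist U0 dU0 SU0 (tens_S U0 SU0 (i, r)) (tens_S U0 SU0 (i, s))"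
      using short S_props(1) M by blast
    then have "\<bar>s - r\<bar> \<le> tens_dist U0 dU0 SU0 (tens_S U0 SU0 (i, r)) (tens_S U0 SU0 (i, s))"
      using S_props(2) M unfolding dU0_def by (simp add: abs_minus_commute)
    then show "tens_dist U0 dU0 SU0 (tens_S U0 SU0 (i, r)) (tens_S U0 SU0 (i, s)) = \<bar>s - r\<bar>"
      using edge_le(1)[OF i r s] by simp
    have "dU0 (alpha_M (tens_S U0 SU0 (r, i))) (alpha_M (tens_S U0 SU0 (s, i)))
          \<le> tens_dist U0 dU0 SU0 (tens_S U0 SU0 (r, i)) (tens_S U0 SU0 (s, i))"
      using short S_props(1) M by blast
    then have "\<bar>s - r\<bar> \<le> tens_dist U0 dU0 SU0 (tens_S U0 SU0 (r, i)) (tens_S U0 SU0 (s, i))"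
      using S_props(2) M unfolding dU0_def by (simp add: abs_minus_commute)
    then show "tens_dist U0 dU0 SU0 (tens_S U0 SU0 (r, i)) (tens_S U0 SU0 (s, i)) = \<bar>s - r\<bar>"
      using edge_le(2)[OF i r s] by simp
  qed
  show "\<forall>p\<in>M0. \<forall>q\<in>M0. \<bar>fst p - fst q\<bar> + \<bar>snd p - snd q\<bar>
           \<le> tens_dist U0 dU0 SU0 (tens_S U0 SU0 p) (tens_S U0 SU0 q)"
  proof (intro ballI)
    fix p q assume p: "p \<in> M0" and q: "q \<in> M0"
    have "dU0 (alpha_M (tens_S U0 SU0 p)) (alpha_M (tens_S U0 SU0 q))
          \<le> tens_dist U0 dU0 SU0 (tens_S U0 SU0 p) (tens_S U0 SU0 q)"
      using short S_props(1) p q by blast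
    then show "\<bar>fst p - fst q\<bar> + \<bar>snd p - snd q\<bar>
           \<le> tens_dist U0 dU0 SU0 (tens_S U0 SU0 p) (tens_S U0 SU0 q)"
      using S_props(2) p q unfolding dU0_def by simp
  qed
qed

theorem mainTheorem14:
  shows "(\<forall>z w. tens_rel U0 SU0 z w \<longrightarrow> alpha_pre z = alpha_pre w)
       \<and> (\<forall>z \<in> Mset \<times> U0. alpha_M (tens_class U0 SU0 z) = alpha_pre z)
       \<and> squams_morphism (tens_carrier U0 SU0) (tens_dist U0 dU0 SU0) (tens_S U0 SU0)
                          U0 dU0 SU0 alpha_M
       \<and> inj_on alpha_M (tens_carrier U0 SU0)"
proof (intro conjI)
  show "\<forall>z w. tens_rel U0 SU0 z w \<longrightarrow> alpha_pre z = alpha_pre w" using rel_alpha by blast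
  show "\<forall>z \<in> Mset \<times> U0. alpha_M (tens_class U0 SU0 z) = alpha_pre z" using alpha_class by blast
  show "inj_on alpha_M (tens_carrier U0 SU0)" by (rule alpha_inj)
  show "squams_morphism (tens_carrier U0 SU0) (tens_dist U0 dU0 SU0) (tens_S U0 SU0)
                          U0 dU0 SU0 alpha_M"
    unfolding squams_morphism_def
  proof (intro conjI)
    show "square_metric_space (tens_carrier U0 SU0) (tens_dist U0 dU0 SU0) (tens_S U0 SU0)"
      by (rule tens_sqms)
    show "square_metric_space U0 dU0 SU0" by (rule U0_sqms)
    show "alpha_M ` tens_carrier U0 SU0 \<subseteq> U0" using carrier_alpha by blast
    show "\<forall>x\<in>tens_carrier U0 SU0. \<forall>y\<in>tens_carrier U0 SU0.
            dU0 (alpha_M x) (alpha_M y) \<le> tens_dist U0 dU0 SU0 x y" using short by blast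
    show "\<forall>p\<in>M0. alpha_M (tens_S U0 SU0 p) = SU0 p" using S_props(2) unfolding SU0_def by blast
  qed
qed

end
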